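(* Let $N=2^n$ and let $a,a'\in[0,N)$ be such that there exist indices $0\le u<w<n$ with $b_k(a)=b_k(a')$ for all $k\in[0,n)\setminus\{u,w\}$, $b_u(a)=b_w(a')=1$ and $b_w(a)=b_u(a')=0$. Then $\mathrm{w}(\mathbf{g}_a)=\mathrm{w}(\mathbf{g}_{a'})$ and $s^{(n)}_a>s^{(n)}_{a'}$.
   Context: All vectors are binary (over $GF(2)$), indices are zero-based. Let $G_N=\begin{pmatrix}1&0\\1&1\end{pmatrix}^{\otimes n}$ for $N=2^n$, with rows $\mathbf{g}_0,\ldots,\mathbf{g}_{N-1}$; $\mathrm{w}(\cdot)$ is Hamming weight. $S^{(n)}_{i,w}$ is the number of words of weight $w$ in $\mathbf{g}_i+\langle\mathbf{g}_{i+1},\ldots,\mathbf{g}_{N-1}\rangle$, and $s^{(n)}_i:=S^{(n)}_{i,\mathrm{w}(\mathbf{g}_i)}$ (the first nonzero entry of $(S^{(n)}_{i,w})_w$). For $i\in[0,N)$, $b_j(i)$ denotes the $j$-th bit of $i$, i.e. $i=\sum_{j=0}^{n-1}b_j(i)2^j$. *)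

theory Defs
  imports Main "HOL-Library.Z2"
begin

text \<open>Binary vectors of length N = 2^n are functions nat => bit (bit = GF(2)),
  relevant only on positions 0..<2^n.\<close>

text \<open>The kernel F = [[1,0],[1,1]] (indices 0,1).\<close>
definition Fker :: "nat \<Rightarrow> nat \<Rightarrow> bit" where
  "Fker i j = (if i = 0 \<and> j = 0 then 1 else if i = 1 then 1 else 0)"

text \<open>G_N = F^{\<otimes> n}, built as G_{2^(n+1)} = F \<otimes> G_{2^n} (Kronecker product).\<close>
fun Gmat :: "nat \<Rightarrow> nat \<Rightarrow> nat \<Rightarrow> bit" where
  "Gmat 0 i j = 1"
| "Gmat (Suc n) i j = Fker (i div 2^n) (j div 2^n) * Gmat n (i mod 2^n) (j mod 2^n)"

definition grow :: "nat \<Rightarrow> nat \<Rightarrow> nat \<Rightarrow> bit" where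
  "grow n i = (\<lambda>j. if j < 2^n then Gmat n i j else 0)"

definition hw :: "nat \<Rightarrow> (nat \<Rightarrow> bit) \<Rightarrow> nat" where
  "hw n v = card {j. j < 2^n \<and> v j \<noteq> 0}"

definition coset :: "nat \<Rightarrow> nat \<Rightarrow> (nat \<Rightarrow> bit) set" where
  "coset n i = {(\<lambda>j. grow n i j + (\<Sum>k\<in>T. grow n k j)) | T. T \<subseteq> {i<..<2^n}}"

definition Scnt :: "nat \<Rightarrow> nat \<Rightarrow> nat \<Rightarrow> nat" where
  "Scnt n i w = card {v \<in> coset n i. hw n v = w}"

definition scnt :: "nat \<Rightarrow> nat \<Rightarrow> nat" where
  "scnt n i = Scnt n i (hw n (grow n i))"

definition bj :: "nat \<Rightarrow> nat \<Rightarrow> nat" where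
  "bj j i = (i div 2^j) mod 2"

end

theory Submission imports Defs "HOL-Library.Function_Algebras" begin

lemma bit_add_self[simp]: "(x::bit) + x = 0" by (cases x) simp_all
lemma bit_cases2: "(x::bit) = 0 \<or> x = 1" by (cases x) simp_all

definition Vn :: "nat \<Rightarrow> (nat \<Rightarrow> bit) set" where
  "Vn n = {v. \<forall>j. 2^n \<le> j \<longrightarrow> v j = 0}"

definition join :: "nat \<Rightarrow> (nat \<Rightarrow> bit) \<Rightarrow> (nat \<Rightarrow> bit) \<Rightarrow> nat \<Rightarrow> bit" where
  "join n x y = (\<lambda>j. if j < 2^n then x j else y (j - 2^n))"

lemma grow_Vn: "grow n k \<in> Vn n" by (simp add: grow_def Vn_def)

lemma sum_apply': "(\<Sum>k\<in>T. f k) j = (\<Sum>k\<in>T. (f k j :: bit))"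
  by (induction T rule: infinite_finite_induct) auto

lemma sum_Vn: "(\<And>k. k \<in> T \<Longrightarrow> f k \<in> Vn n) \<Longrightarrow> (\<Sum>k\<in>T. f k) \<in> Vn n"
  unfolding Vn_def by (auto simp: sum_apply' intro!: sum.neutral)

lemma add_Vn: "x \<in> Vn n \<Longrightarrow> y \<in> Vn n \<Longrightarrow> x + y \<in> Vn n"
  unfolding Vn_def by auto

lemma join_add: "join n x y + join n x' y' = join n (x+x') (y+y')"
  by (auto simp: join_def fun_eq_iff)

lemma join_zero: "join n 0 0 = 0"
  by (auto simp: join_def fun_eq_iff)

lemma join_sum: "(\<Sum>k\<in>T. join n (f k) (g k)) = join n (\<Sum>k\<in>T. f k) (\<Sum>k\<in>T. g k)"
  by (auto simp: fun_eq_iff sum_apply' join_def)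

lemma join_Vn: "x \<in> Vn n \<Longrightarrow> y \<in> Vn n \<Longrightarrow> join n x y \<in> Vn (Suc n)"
  unfolding Vn_def join_def by auto

lemma Vn_join: "v \<in> Vn (Suc n) \<Longrightarrow> v = join n (\<lambda>j. if j < 2^n then v j else 0) (\<lambda>j. if j < 2^n then v (j + 2^n) else 0)"
  unfolding Vn_def join_def by (auto simp: fun_eq_iff)

lemma join_inj: "x \<in> Vn n \<Longrightarrow> y \<in> Vn n \<Longrightarrow> x' \<in> Vn n \<Longrightarrow> y' \<in> Vn n \<Longrightarrow>
   join n x y = join n x' y' \<Longrightarrow> x = x' \<and> y = y'"
proof -
  assume a: "x \<in> Vn n" "y \<in> Vn n" "x' \<in> Vn n" "y' \<in> Vn n" and e: "join n x y = join n x' y'"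
  have "x j = x' j" for j
  proof (cases "j < 2^n")
    case True then show ?thesis using fun_cong[OF e, of j] by (simp add: join_def)
  next
    case False then show ?thesis using a by (simp add: Vn_def)
  qed
  moreover have "y j = y' j" for j
  proof (cases "j < 2^n")
    case True then show ?thesis using fun_cong[OF e, of "j + 2^n"] by (simp add: join_def)
  next
    case False then show ?thesis using a by (simp add: Vn_def)
  qed
  ultimately show ?thesis by auto
qed

lemma grow_Suc_lo: "k < 2^n \<Longrightarrow> grow (Suc n) k = join n (grow n k) 0"
  by (auto simp: fun_eq_iff grow_def join_def Fker_def div_eq_0_iff)

lemma grow_Suc_hi: "k < 2^n \<Longrightarrow> grow (Suc n) (2^n + k) = join n (grow n k) (grow n k)"
proof -
  assume k: "k < 2^n"
  have kd: "(2^n+k) div 2^n = (1::nat)" "(2^n + k) mod 2^n = k" using k by (simp_all add: div_add_self1)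
  show ?thesis
  proof (rule ext)
    fix j
    consider "j < (2::nat)^n" | "2^n \<le> j" "j < 2^Suc n" | "2^Suc n \<le> j" by linarith
    then show "grow (Suc n) (2^n + k) j = join n (grow n k) (grow n k) j"
    proof cases
      case 1 then show ?thesis using k kd by (simp add: grow_def join_def Fker_def)
    next
      case 2
      then obtain r where r: "j = 2^n + r" "r < 2^n" by (metis add_diff_inverse_nat less_diff_conv2 mult_2 not_less power_Suc)
      then have "j div 2^n = 1" "j mod 2^n = j - 2^n"
        by (simp_all add: div_add_self1)
      then show ?thesis using 2 k kd r by (simp add: grow_def join_def Fker_def)
    next
      case 3 then show ?thesis by (auto simp add: grow_def join_def)
    qed
  qed
qed

lemma sum_split:
  assumes "T1 \<subseteq> {..<2^n}" "T2 \<subseteq> {..<2^n}"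
  shows "(\<Sum>k\<in>T1 \<union> (+) (2^n) ` T2. grow (Suc n) k)
     = join n (sum (grow n) T1 + sum (grow n) T2) (sum (grow n) T2)"
proof -
  have f1: "finite T1" "finite T2" using assms finite_subset by blast+
  have d: "T1 \<inter> (+) (2^n) ` T2 = {}" using assms by auto
  have s1: "(\<Sum>k\<in>T1. grow (Suc n) k) = join n (sum (grow n) T1) 0"
  proof -
    have "(\<Sum>k\<in>T1. grow (Suc n) k) = (\<Sum>k\<in>T1. join n (grow n k) 0)"
      using assms by (intro sum.cong) (auto simp: grow_Suc_lo)
    also have "\<dots> = join n (sum (grow n) T1) 0" by (simp add: join_sum)
    finally show ?thesis .
  qed
  have s2: "(\<Sum>k\<in>(+) (2^n) ` T2. grow (Suc n) k) = join n (sum (grow n) T2) (sum (grow n) T2)"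
  proof -
    have "(\<Sum>k\<in>(+) (2^n) ` T2. grow (Suc n) k) = (\<Sum>k\<in>T2. grow (Suc n) (2^n + k))"
      by (subst sum.reindex) auto
    also have "\<dots> = (\<Sum>k\<in>T2. join n (grow n k) (grow n k))"
      using assms by (intro sum.cong) (auto simp: grow_Suc_hi)
    also have "\<dots> = join n (sum (grow n) T2) (sum (grow n) T2)" by (simp add: join_sum)
    finally show ?thesis .
  qed
  show ?thesis
    using f1 d by (simp add: sum.union_disjoint s1 s2 join_add)
qed

lemma span_all: "y \<in> Vn n \<Longrightarrow> \<exists>T \<subseteq> {..<2^n}. y = sum (grow n) T"
proof (induction n arbitrary: y)
  case 0
  show ?case
  proof (cases "y 0 = 0")
    case True
    have "y x = 0" for x using 0 True by (cases "x = 0") (auto simp: Vn_def)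
    then have "y = 0" by auto
    then show ?thesis by (intro exI[of _ "{}"]) auto
  next
    case False
    have "y x = grow 0 0 x" for x using 0 False by (cases "x = 0") (auto simp: Vn_def grow_def)
    then have "y = grow 0 0" by auto
    then show ?thesis by (intro exI[of _ "{0}"]) auto
  qed
next
  case (Suc n)
  define yl where "yl = (\<lambda>j. if j < 2^n then y j else 0)"
  define yh where "yh = (\<lambda>j. if j < (2::nat)^n then y (j + 2^n) else 0)"
  have yj: "y = join n yl yh" using Vn_join[OF Suc.prems] by (simp add: yl_def yh_def)
  have v: "yl \<in> Vn n" "yh \<in> Vn n" by (auto simp: Vn_def yl_def yh_def)
  obtain T2 where T2: "T2 \<subseteq> {..<2^n}" "yh = sum (grow n) T2" using Suc.IH[OF v(2)] by blast
  obtain T1 where T1: "T1 \<subseteq> {..<2^n}" "yl + yh = sum (grow n) T1" using Suc.IH[OF add_Vn[OF v]] by blast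
  have "sum (grow (Suc n)) (T1 \<union> (+) (2^n) ` T2) = join n (yl + yh + yh) yh"
    using sum_split[OF T1(1) T2(1)] T1 T2 by simp
  also have "yl + yh + yh = yl" by (simp add: fun_eq_iff)
  finally have "y = sum (grow (Suc n)) (T1 \<union> (+) (2^n) ` T2)" using yj by simp
  moreover have "T1 \<union> (+) (2^n) ` T2 \<subseteq> {..<2^Suc n}" using T1 T2 by auto
  ultimately show ?case by blast
qed

lemma coset_alt: "coset n i = (\<lambda>T. grow n i + sum (grow n) T) ` {T. T \<subseteq> {i<..<2^n}}"
  unfolding coset_def by (auto simp: fun_eq_iff sum_apply')

lemma coset_Vn: "v \<in> coset n i \<Longrightarrow> v \<in> Vn n"
  unfolding coset_alt by (auto intro!: add_Vn grow_Vn sum_Vn)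

lemma T_decomp: "(T::nat set) \<subseteq> {..<2^Suc n} \<Longrightarrow> T = (T \<inter> {..<2^n}) \<union> (+) (2^n) ` {k. 2^n + k \<in> T}
   \<and> {k. 2^n + k \<in> T} \<subseteq> {..<2^n}"
proof (intro conjI)
  assume T: "T \<subseteq> {..<2^Suc n}"
  show "{k. 2^n + k \<in> T} \<subseteq> {..<2^n}" using T by auto
  show "T = (T \<inter> {..<2^n}) \<union> (+) (2^n) ` {k. 2^n + k \<in> T}"
  proof
    show "T \<subseteq> (T \<inter> {..<2^n}) \<union> (+) (2^n) ` {k. 2^n + k \<in> T}"
    proof
      fix x assume "x \<in> T"
      show "x \<in> (T \<inter> {..<2^n}) \<union> (+) (2^n) ` {k. 2^n + k \<in> T}"
      proof (cases "x < 2^n")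
        case True then show ?thesis using \<open>x \<in> T\<close> by simp
      next
        case False
        then have "x = 2^n + (x - 2^n)" by simp
        then show ?thesis using \<open>x \<in> T\<close> by (metis (mono_tags, lifting) UnI2 imageI mem_Collect_eq)
      qed
    qed
  qed auto
qed

lemma cosetA:
  assumes i0: "i0 < 2^n"
  shows "coset (Suc n) (2^n + i0) = (\<lambda>x. join n x x) ` coset n i0"
proof
  show "coset (Suc n) (2^n + i0) \<subseteq> (\<lambda>x. join n x x) ` coset n i0"
  proof
    fix v assume "v \<in> coset (Suc n) (2^n + i0)"
    then obtain T where T: "T \<subseteq> {2^n + i0<..<2^Suc n}" and v: "v = grow (Suc n) (2^n+i0) + sum (grow (Suc n)) T"
      unfolding coset_alt by auto
    define T2 where "T2 = {k. 2^n + k \<in> T}"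
    have "T \<subseteq> {..<2^Suc n}" using T by auto
    from T_decomp[OF this] have dT: "T = (T \<inter> {..<2^n}) \<union> (+) (2^n) ` T2" and T2s: "T2 \<subseteq> {..<2^n}"
      unfolding T2_def by auto
    have e: "T \<inter> {..<2^n} = {}" using T by auto
    have T2s': "T2 \<subseteq> {i0<..<2^n}" using T T2s unfolding T2_def by auto
    have "sum (grow (Suc n)) T = join n (sum (grow n) T2) (sum (grow n) T2)"
      using sum_split[of "{}" n T2] T2s dT e by simp
    then have "v = join n (grow n i0 + sum (grow n) T2) (grow n i0 + sum (grow n) T2)"
      using v grow_Suc_hi[OF i0] by (simp add: join_add)
    moreover have "grow n i0 + sum (grow n) T2 \<in> coset n i0" unfolding coset_alt using T2s' by blast
    ultimately show "v \<in> (\<lambda>x. join n x x) ` coset n i0" by blast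
  qed
next
  show "(\<lambda>x. join n x x) ` coset n i0 \<subseteq> coset (Suc n) (2^n + i0)"
  proof
    fix v assume "v \<in> (\<lambda>x. join n x x) ` coset n i0"
    then obtain T2 where T2: "T2 \<subseteq> {i0<..<2^n}" and v: "v = join n (grow n i0 + sum (grow n) T2) (grow n i0 + sum (grow n) T2)"
      unfolding coset_alt by auto
    have "sum (grow (Suc n)) ({} \<union> (+) (2^n) ` T2) = join n (sum (grow n) T2) (sum (grow n) T2)"
      using sum_split[of "{}" n T2] T2 by (auto simp: subset_iff)
    then have "v = grow (Suc n) (2^n+i0) + sum (grow (Suc n)) ((+) (2^n) ` T2)"
      using v grow_Suc_hi[OF i0] by (simp add: join_add)
    moreover have "(+) (2^n) ` T2 \<subseteq> {2^n + i0<..<2^Suc n}" using T2 by auto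
    ultimately show "v \<in> coset (Suc n) (2^n + i0)" unfolding coset_alt by blast
  qed
qed

lemma cosetB:
  assumes i: "i < 2^n"
  shows "coset (Suc n) i = (\<lambda>(x,y). join n (x+y) y) ` (coset n i \<times> Vn n)"
proof
  show "coset (Suc n) i \<subseteq> (\<lambda>(x,y). join n (x+y) y) ` (coset n i \<times> Vn n)"
  proof
    fix v assume "v \<in> coset (Suc n) i"
    then obtain T where T: "T \<subseteq> {i<..<2^Suc n}" and v: "v = grow (Suc n) i + sum (grow (Suc n)) T"
      unfolding coset_alt by auto
    define T2 where "T2 = {k. 2^n + k \<in> T}"
    define T1 where "T1 = T \<inter> {..<2^n}"
    have "T \<subseteq> {..<2^Suc n}" using T by auto
    from T_decomp[OF this] have dT: "T = T1 \<union> (+) (2^n) ` T2" and T2s: "T2 \<subseteq> {..<2^n}"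
      unfolding T2_def T1_def by auto
    have T1s: "T1 \<subseteq> {i<..<2^n}" "T1 \<subseteq> {..<2^n}" using T unfolding T1_def by auto
    have "sum (grow (Suc n)) T = join n (sum (grow n) T1 + sum (grow n) T2) (sum (grow n) T2)"
      using sum_split[OF T1s(2) T2s] dT by simp
    then have "v = join n ((grow n i + sum (grow n) T1) + sum (grow n) T2) (sum (grow n) T2)"
      using v grow_Suc_lo[OF i] by (simp add: join_add add.assoc)
    moreover have "grow n i + sum (grow n) T1 \<in> coset n i" unfolding coset_alt using T1s by blast
    moreover have "sum (grow n) T2 \<in> Vn n" by (auto intro!: sum_Vn grow_Vn)
    ultimately show "v \<in> (\<lambda>(x,y). join n (x+y) y) ` (coset n i \<times> Vn n)" by auto
  qed
next
  show "(\<lambda>(x,y). join n (x+y) y) ` (coset n i \<times> Vn n) \<subseteq> coset (Suc n) i"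
  proof
    fix v assume "v \<in> (\<lambda>(x,y). join n (x+y) y) ` (coset n i \<times> Vn n)"
    then obtain x y where x: "x \<in> coset n i" and y: "y \<in> Vn n" and v: "v = join n (x+y) y" by auto
    obtain T1 where T1: "T1 \<subseteq> {i<..<2^n}" "x = grow n i + sum (grow n) T1" using x unfolding coset_alt by auto
    obtain T2 where T2: "T2 \<subseteq> {..<2^n}" "y = sum (grow n) T2" using span_all[OF y] by auto
    have T1s: "T1 \<subseteq> {..<2^n}" using T1 by auto
    have "sum (grow (Suc n)) (T1 \<union> (+) (2^n) ` T2) = join n (sum (grow n) T1 + sum (grow n) T2) (sum (grow n) T2)"
      using sum_split[OF T1s T2(1)] by simp
    then have "v = grow (Suc n) i + sum (grow (Suc n)) (T1 \<union> (+) (2^n) ` T2)"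
      using v grow_Suc_lo[OF i] T1 T2 by (simp add: join_add add.assoc)
    moreover have "T1 \<union> (+) (2^n) ` T2 \<subseteq> {i<..<2^Suc n}" using T1 T2 i by auto
    ultimately show "v \<in> coset (Suc n) i" unfolding coset_alt by blast
  qed
qed

lemma hw_join: "hw (Suc n) (join n x y) = hw n x + hw n y"
proof -
  have e: "{j. j < 2^Suc n \<and> join n x y j \<noteq> 0} = {j. j < 2^n \<and> x j \<noteq> 0} \<union> (+) (2^n) ` {j. j < 2^n \<and> y j \<noteq> 0}"
  proof (rule set_eqI)
    fix j
    show "j \<in> {j. j < 2^Suc n \<and> join n x y j \<noteq> 0} \<longleftrightarrow> j \<in> {j. j < 2^n \<and> x j \<noteq> 0} \<union> (+) (2^n) ` {j. j < 2^n \<and> y j \<noteq> 0}"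
    proof (cases "j < 2^n")
      case True then show ?thesis by (auto simp: join_def)
    next
      case False
      then obtain r where r: "j = 2^n + r" by (metis add_diff_inverse_nat)
      show ?thesis unfolding r by (auto simp: join_def image_iff)
    qed
  qed
  have "card ({j. j < 2^n \<and> x j \<noteq> 0} \<union> (+) (2^n) ` {j. j < 2^n \<and> y j \<noteq> 0})
     = card {j. j < 2^n \<and> x j \<noteq> 0} + card ((+) (2^n) ` {j. j < 2^n \<and> y j \<noteq> 0})"
    by (rule card_Un_disjoint) auto
  also have "card ((+) (2^n) ` {j. j < 2^n \<and> y j \<noteq> 0}) = card {j. j < 2^n \<and> y j \<noteq> 0}"
    by (rule card_image) auto
  finally show ?thesis unfolding hw_def e .
qed

lemma hw_zero: "hw n 0 = 0" by (simp add: hw_def)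

lemma hw_add: "hw n (x+y) + hw n y = hw n x + 2 * card ({j. j < 2^n \<and> y j \<noteq> 0} - {j. j < 2^n \<and> x j \<noteq> 0})"
proof -
  define A where "A = {j. j < (2::nat)^n \<and> x j \<noteq> 0}"
  define B where "B = {j. j < (2::nat)^n \<and> y j \<noteq> 0}"
  have fA: "finite A" "finite B" unfolding A_def B_def by auto
  have xy: "{j. j < 2^n \<and> (x+y) j \<noteq> 0} = (A - B) \<union> (B - A)"
    unfolding A_def B_def by (auto simp: plus_fun_def)
  have c1: "card ((A - B) \<union> (B - A)) = card (A - B) + card (B - A)"
    using fA by (intro card_Un_disjoint) auto
  have c2: "card B = card (A \<inter> B) + card (B - A)"
    using fA by (metis Int_commute card_Int_Diff)
  have c3: "card A = card (A - B) + card (A \<inter> B)"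
    using fA by (metis Int_commute add.commute card_Int_Diff)
  show ?thesis unfolding hw_def xy A_def[symmetric] B_def[symmetric] using c1 c2 c3
    by linarith
qed

fun pc :: "nat \<Rightarrow> nat \<Rightarrow> nat" where
  "pc 0 i = 0"
| "pc (Suc n) i = (if 2^n \<le> i then Suc (pc n (i - 2^n)) else pc n i)"

fun EE :: "nat \<Rightarrow> nat \<Rightarrow> nat" where
  "EE 0 i = 0"
| "EE (Suc n) i = (if 2^n \<le> i then EE n (i - 2^n) else EE n i + 2^(pc n i))"

lemma coset0: "coset 0 0 = {grow 0 0}"
proof -
  have "{0<..<2^0} = ({}::nat set)" by auto
  then show ?thesis unfolding coset_alt by auto
qed

lemma hw_grow: "i < 2^n \<Longrightarrow> hw n (grow n i) = 2^(pc n i)"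
proof (induction n arbitrary: i)
  case 0
  then have "i = 0" by simp
  then show ?case by (simp add: hw_def grow_def)
next
  case (Suc n)
  show ?case
  proof (cases "2^n \<le> i")
    case True
    then obtain i0 where i0: "i = 2^n + i0" "i0 < 2^n" using Suc.prems
      by (metis add_diff_inverse_nat add_less_cancel_left mult_2 not_less power_Suc)
    then show ?thesis using Suc.IH[OF i0(2)] by (simp add: grow_Suc_hi hw_join)
  next
    case False
    then show ?thesis using Suc.IH[of i] by (simp add: grow_Suc_lo hw_join hw_zero)
  qed
qed

lemma min_wt: "i < 2^n \<Longrightarrow> v \<in> coset n i \<Longrightarrow> hw n (grow n i) \<le> hw n v"
proof (induction n arbitrary: i v)
  case 0
  then show ?case using coset0 by simp
next
  case (Suc n)
  show ?case
  proof (cases "2^n \<le> i")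
    case True
    then obtain i0 where i0: "i = 2^n + i0" "i0 < 2^n" using Suc.prems
      by (metis add_diff_inverse_nat add_less_cancel_left mult_2 not_less power_Suc)
    then obtain x where x: "x \<in> coset n i0" "v = join n x x" using Suc.prems cosetA by auto
    then show ?thesis using Suc.IH[OF i0(2) x(1)] i0 by (simp add: grow_Suc_hi hw_join)
  next
    case False
    then have i: "i < 2^n" by simp
    then obtain x y where x: "x \<in> coset n i" "y \<in> Vn n" "v = join n (x+y) y" using Suc.prems cosetB by auto
    have "hw n x \<le> hw n (x+y) + hw n y" using hw_add[of n x y] by simp
    then show ?thesis using Suc.IH[OF i x(1)] i x by (simp add: grow_Suc_lo hw_join hw_zero)
  qed
qed

lemma finite_coset: "finite (coset n i)"
  unfolding coset_alt by (rule finite_imageI) (auto intro: finite_subset)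

definition Bset :: "nat \<Rightarrow> (nat \<Rightarrow> bit) \<Rightarrow> (nat \<Rightarrow> bit) set" where
  "Bset n x = {y \<in> Vn n. \<forall>j. y j \<noteq> 0 \<longrightarrow> x j \<noteq> 0}"

lemma Bset_img: "Bset n x = (\<lambda>S j. if j \<in> S then 1 else 0) ` Pow {j. j < 2^n \<and> x j \<noteq> 0}"
proof
  show "Bset n x \<subseteq> (\<lambda>S j. if j \<in> S then 1 else 0) ` Pow {j. j < 2^n \<and> x j \<noteq> 0}"
  proof
    fix y assume y: "y \<in> Bset n x"
    have "y = (\<lambda>j. if j \<in> {j. y j \<noteq> 0} then 1 else 0)"
      by (auto simp: fun_eq_iff)
    moreover have "{j. y j \<noteq> 0} \<subseteq> {j. j < 2^n \<and> x j \<noteq> 0}"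
      using y by (auto simp: Bset_def Vn_def) (metis not_less zero_neq_one)
    ultimately show "y \<in> (\<lambda>S j. if j \<in> S then 1 else 0) ` Pow {j. j < 2^n \<and> x j \<noteq> 0}" by blast
  qed
next
  show "(\<lambda>S j. if j \<in> S then 1 else 0) ` Pow {j. j < 2^n \<and> x j \<noteq> 0} \<subseteq> Bset n x"
    by (auto simp: Bset_def Vn_def split: if_splits)
qed

lemma card_Bset: "card (Bset n x) = 2^(hw n x)" "finite (Bset n x)"
proof -
  have inj: "inj_on (\<lambda>S j. if j \<in> S then (1::bit) else 0) (Pow {j. j < 2^n \<and> x j \<noteq> 0})"
  proof (rule inj_onI)
    fix S S' assume "(\<lambda>j. if j \<in> S then (1::bit) else 0) = (\<lambda>j. if j \<in> S' then 1 else 0)"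
    then have "\<And>j. (if j \<in> S then (1::bit) else 0) = (if j \<in> S' then 1 else 0)" by metis
    then show "S = S'" by (metis one_neq_zero subsetI subset_antisym)
  qed
  have "card (Bset n x) = card (Pow {j. j < 2^n \<and> x j \<noteq> 0})"
    unfolding Bset_img by (rule card_image[OF inj])
  then show "card (Bset n x) = 2^(hw n x)" by (simp add: card_Pow hw_def)
  show "finite (Bset n x)" unfolding Bset_img by auto
qed

lemma scnt_formula: "i < 2^n \<Longrightarrow> scnt n i = 2^(EE n i)"
proof (induction n arbitrary: i)
  case 0
  then have "i = 0" by simp
  have "{v \<in> coset 0 0. hw 0 v = hw 0 (grow 0 0)} = {grow 0 0}" by (auto simp: coset0)
  then show ?case using \<open>i = 0\<close> by (simp add: scnt_def Scnt_def)
next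
  case (Suc n)
  show ?case
  proof (cases "2^n \<le> i")
    case True
    then obtain i0 where i0: "i = 2^n + i0" "i0 < 2^n" using Suc.prems
      by (metis add_diff_inverse_nat add_less_cancel_left mult_2 not_less power_Suc)
    have hg: "hw (Suc n) (grow (Suc n) i) = 2 * hw n (grow n i0)"
      using i0 by (simp add: grow_Suc_hi hw_join)
    have eq: "{v \<in> coset (Suc n) i. hw (Suc n) v = 2 * hw n (grow n i0)}
       = (\<lambda>x. join n x x) ` {x \<in> coset n i0. hw n x = hw n (grow n i0)}"
      unfolding i0(1) cosetA[OF i0(2)] by (auto simp: hw_join)
    have inj: "inj_on (\<lambda>x. join n x x) {x \<in> coset n i0. hw n x = hw n (grow n i0)}"
      by (rule inj_onI) (use join_inj coset_Vn in blast)
    have "scnt (Suc n) i = scnt n i0"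
      unfolding scnt_def Scnt_def hg eq card_image[OF inj] by simp
    then show ?thesis using Suc.IH[OF i0(2)] i0 by simp
  next
    case False
    then have i: "i < 2^n" by simp
    define m where "m = hw n (grow n i)"
    define A where "A = {x \<in> coset n i. hw n x = m}"
    have hg: "hw (Suc n) (grow (Suc n) i) = m"
      using i by (simp add: grow_Suc_lo hw_join hw_zero m_def)
    have eq: "{v \<in> coset (Suc n) i. hw (Suc n) v = m}
       = (\<lambda>(x,y). join n (x+y) y) ` Sigma A (Bset n)"
    proof
      show "{v \<in> coset (Suc n) i. hw (Suc n) v = m} \<subseteq> (\<lambda>(x,y). join n (x+y) y) ` Sigma A (Bset n)"
      proof
        fix v assume v: "v \<in> {v \<in> coset (Suc n) i. hw (Suc n) v = m}"
        then obtain x y where x: "x \<in> coset n i" "y \<in> Vn n" "v = join n (x+y) y"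
          using cosetB[OF i] by auto
        have h: "hw n (x+y) + hw n y = m" using v x by (simp add: hw_join)
        have mw: "m \<le> hw n x" using min_wt[OF i x(1)] m_def by simp
        have ha: "hw n (x+y) + hw n y = hw n x + 2 * card ({j. j < 2^n \<and> y j \<noteq> 0} - {j. j < 2^n \<and> x j \<noteq> 0})"
          by (rule hw_add)
        have hx: "hw n x = m" and c0: "card ({j. j < 2^n \<and> y j \<noteq> 0} - {j. j < 2^n \<and> x j \<noteq> 0}) = 0"
          using h mw ha by linarith+
        have em: "{j. j < 2^n \<and> y j \<noteq> 0} - {j. j < 2^n \<and> x j \<noteq> 0} = {}"
          using c0 by (simp only: card_eq_0_iff) auto
        have "\<forall>j. y j \<noteq> 0 \<longrightarrow> x j \<noteq> 0"
        proof (intro allI impI)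
          fix j assume yj: "y j \<noteq> 0"
          have "j < 2^n"
          proof (rule ccontr)
            assume "\<not> j < 2^n"
            then have "y j = 0" using x(2) by (simp add: Vn_def)
            with yj show False by simp
          qed
          then show "x j \<noteq> 0" using em yj by blast
        qed
        then have "y \<in> Bset n x" using x(2) unfolding Bset_def by auto
        moreover have "x \<in> A" using x hx A_def by simp
        ultimately show "v \<in> (\<lambda>(x,y). join n (x+y) y) ` Sigma A (Bset n)" using x(3) by auto
      qed
    next
      show "(\<lambda>(x,y). join n (x+y) y) ` Sigma A (Bset n) \<subseteq> {v \<in> coset (Suc n) i. hw (Suc n) v = m}"
      proof
        fix v assume "v \<in> (\<lambda>(x,y). join n (x+y) y) ` Sigma A (Bset n)"
        then obtain x y where x: "x \<in> A" "y \<in> Bset n x" "v = join n (x+y) y" by auto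
        have yV: "y \<in> Vn n" using x(2) by (simp add: Bset_def)
        have "{j. j < 2^n \<and> y j \<noteq> 0} - {j. j < 2^n \<and> x j \<noteq> 0} = {}"
          using x(2) by (auto simp: Bset_def)
        then have "hw n (x+y) + hw n y = hw n x" using hw_add[of n x y] by simp
        then have "hw (Suc n) v = m" using x A_def by (simp add: hw_join)
        moreover have "v \<in> coset (Suc n) i" using cosetB[OF i] x yV A_def by auto
        ultimately show "v \<in> {v \<in> coset (Suc n) i. hw (Suc n) v = m}" by simp
      qed
    qed
    have inj: "inj_on (\<lambda>(x,y). join n (x+y) y) (Sigma A (Bset n))"
    proof (rule inj_onI)
      fix p q assume a0: "p \<in> Sigma A (Bset n)" "q \<in> Sigma A (Bset n)"
        and e0: "(\<lambda>(x,y). join n (x+y) y) p = (\<lambda>(x,y). join n (x+y) y) q"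
      obtain x y where p: "p = (x,y)" by (cases p)
      obtain x' y' where q: "q = (x',y')" by (cases q)
      have a: "(x,y) \<in> Sigma A (Bset n)" "(x',y') \<in> Sigma A (Bset n)" using a0 p q by auto
      have e: "join n (x+y) y = join n (x'+y') y'" using e0 p q by simp
      have V: "x \<in> Vn n" "x' \<in> Vn n" "y \<in> Vn n" "y' \<in> Vn n"
        using a coset_Vn unfolding A_def Bset_def by auto
      have xy: "x + y = x' + y'" "y = y'"
        using join_inj[OF add_Vn[OF V(1,3)] V(3) add_Vn[OF V(2,4)] V(4) e] by auto
      then have "x = x'" by (metis add_right_cancel)
      then show "p = q" using p q xy by simp
    qed
    have fA: "finite A" using finite_coset unfolding A_def by simp
    have "card (Sigma A (Bset n)) = (\<Sum>x\<in>A. card (Bset n x))"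
      by (rule card_SigmaI[OF fA]) (simp add: card_Bset)
    also have "\<dots> = (\<Sum>x\<in>A. 2^m)"
      by (rule sum.cong) (auto simp: card_Bset A_def)
    also have "\<dots> = card A * 2^m" by simp
    finally have cS: "card (Sigma A (Bset n)) = card A * 2^m" .
    have "scnt (Suc n) i = card A * 2^m"
      unfolding scnt_def Scnt_def hg eq card_image[OF inj] cS ..
    moreover have "card A = scnt n i" unfolding A_def scnt_def Scnt_def m_def ..
    ultimately show ?thesis using Suc.IH[OF i] i hw_grow[OF i] m_def
      by (simp add: power_add)
  qed
qed



definition cbits :: "nat \<Rightarrow> nat \<Rightarrow> nat" where
  "cbits x j = (\<Sum>k<j. bj k x)"

definition ff :: "nat \<Rightarrow> nat \<Rightarrow> nat" where
  "ff x j = (if bj j x = 0 then 2^(cbits x j) else 0)"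

lemma pw_split: "k < (n::nat) \<Longrightarrow> (2::nat)^n = 2^(n-k) * 2^k" by (metis le_add_diff_inverse2 less_imp_le power_add)
lemma div_split2: "(x + 2^(n-k) * 2^k) div 2^k = 2^(n-k) + x div (2::nat)^k"
    by (rule div_mult_self1) simp
lemma mod_pw2: "k < (n::nat) \<Longrightarrow> (q + 2^(n-k)) mod 2 = (q::nat) mod 2"
proof -
  assume "k < n"
  then obtain d where "n - k = Suc d" by (metis Suc_diff_Suc)
  then show ?thesis by simp
qed

lemma bj_add_high: "k < n \<Longrightarrow> bj k (x + 2^n) = bj k x"
proof -
  assume k: "k < n"
  have "(x + 2^n) div 2^k = 2^(n-k) + x div 2^k"
    using div_split2[of x n k] pw_split[OF k] by (simp only:)
  then have "bj k (x + 2^n) = (x div 2^k + 2^(n-k)) mod 2" unfolding bj_def by (simp only: add.commute)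
  also have "\<dots> = x div 2^k mod 2" using mod_pw2[OF k] .
  finally show ?thesis unfolding bj_def .
qed

lemma bj_top1: "2^n \<le> i \<Longrightarrow> i < 2^Suc n \<Longrightarrow> bj n i = 1"
proof -
  assume a: "2^n \<le> i" "i < 2^Suc n"
  then obtain r where r: "i = 2^n + r" "r < 2^n" by (metis add_diff_inverse_nat less_diff_conv2 mult_2 not_less power_Suc)
  then have "i div 2^n = 1" by (simp add: div_add_self1)
  then show ?thesis by (simp add: bj_def)
qed

lemma bj_top0: "i < 2^n \<Longrightarrow> bj n i = 0"
  by (simp add: bj_def)

lemma closed_forms: "i < 2^n \<Longrightarrow> pc n i = cbits i n \<and> EE n i = (\<Sum>j<n. ff i j)"
proof (induction n arbitrary: i)
  case 0 then show ?case by (simp add: cbits_def)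
next
  case (Suc n)
  show ?case
  proof (cases "2^n \<le> i")
    case True
    define i0 where "i0 = i - 2^n"
    have i0: "i = i0 + 2^n" "i0 < 2^n" using True Suc.prems unfolding i0_def by auto
    have bjeq: "k < n \<Longrightarrow> bj k i0 = bj k i" for k using bj_add_high[of k n i0] i0 by simp
    have cbeq: "j \<le> n \<Longrightarrow> cbits i0 j = cbits i j" for j
      unfolding cbits_def by (rule sum.cong) (auto simp: bjeq)
    have ffeq: "j < n \<Longrightarrow> ff i0 j = ff i j" for j
      unfolding ff_def using bjeq cbeq by simp
    have top: "bj n i = 1" using True Suc.prems bj_top1 by blast
    have "pc (Suc n) i = Suc (cbits i0 n)" using True Suc.IH[OF i0(2)] i0_def by simp
    also have "\<dots> = cbits i (Suc n)" using cbeq top by (simp add: cbits_def)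
    finally have 1: "pc (Suc n) i = cbits i (Suc n)" .
    have "EE (Suc n) i = (\<Sum>j<n. ff i0 j)" using True Suc.IH[OF i0(2)] i0_def by simp
    also have "\<dots> = (\<Sum>j<n. ff i j)" by (rule sum.cong) (auto simp: ffeq)
    also have "\<dots> = (\<Sum>j<Suc n. ff i j)" using top by (simp add: ff_def)
    finally show ?thesis using 1 by simp
  next
    case False
    then have i: "i < 2^n" by simp
    have top: "bj n i = 0" using bj_top0[OF i] .
    show ?thesis using Suc.IH[OF i] False top by (simp add: cbits_def ff_def)
  qed
qed

lemma cbits_mono: "j \<le> j' \<Longrightarrow> cbits x j \<le> cbits x j'"
  unfolding cbits_def by (rule sum_mono2) auto

lemma bj_le1: "bj k x \<le> 1" by (simp add: bj_def)

lemma compare: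
  fixes n a a' u w :: nat
  assumes "u < w" and "w < n"
    and H: "\<forall>k<n. k \<noteq> u \<and> k \<noteq> w \<longrightarrow> bj k a = bj k a'"
    and "bj u a = 1" and "bj w a' = 1"
    and "bj w a = 0" and "bj u a' = 0"
  shows "cbits a n = cbits a' n \<and> (\<Sum>j<n. ff a' j) < (\<Sum>j<n. ff a j)"
proof -
  have kk: "bj k a + (if k = w then 1 else 0) = bj k a' + (if k = u then 1 else 0)" if "k < n" for k
    using H assms(1,4-7) that by (cases "k = u"; cases "k = w") auto
  have cb: "cbits a j + (if w < j then 1 else 0) = cbits a' j + (if u < j then 1 else 0)" if "j \<le> n" for j
  proof -
    have "(\<Sum>k<j. bj k a + (if k = w then 1 else 0)) = (\<Sum>k<j. bj k a' + (if k = u then 1 else 0))"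
      by (rule sum.cong) (use kk that in auto)
    then show ?thesis by (simp add: sum.distrib cbits_def sum.delta)
  qed
  have c1: "cbits a n = cbits a' n" using cb[of n] assms(1,2) by simp
  define R where "R = {..<n} - {u, w}"
  have dec: "{..<n} = insert u (insert w R)" using assms(1,2) unfolding R_def by auto
  have nin: "u \<notin> insert w R" "w \<notin> R" "finite R" using assms(1,2) unfolding R_def by auto
  have sR: "(\<Sum>j\<in>R. ff a' j) \<le> (\<Sum>j\<in>R. ff a j)"
  proof (rule sum_mono)
    fix j assume j: "j \<in> R"
    then have "j < n" "j \<noteq> u" "j \<noteq> w" unfolding R_def by auto
    then have b: "bj j a = bj j a'" using H by auto
    have "cbits a' j \<le> cbits a j" using cb[of j] \<open>j < n\<close> assms(1) by (auto split: if_splits)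
    then show "ff a' j \<le> ff a j" unfolding ff_def using b by auto
  qed
  have cu: "cbits a' u = cbits a u" using cb[of u] assms(1,2) by simp
  have "cbits a (Suc u) = cbits a u + 1" using assms(4) by (simp add: cbits_def)
  moreover have "cbits a (Suc u) \<le> cbits a w" using assms(1) by (intro cbits_mono) simp
  ultimately have lt: "cbits a' u < cbits a w" using cu by simp
  have "(\<Sum>j<n. ff a' j) = ff a' u + ff a' w + (\<Sum>j\<in>R. ff a' j)"
    unfolding dec using nin by simp
  also have "\<dots> = 2^(cbits a' u) + (\<Sum>j\<in>R. ff a' j)" using assms(5,7) by (simp add: ff_def)
  also have "\<dots> < 2^(cbits a w) + (\<Sum>j\<in>R. ff a j)"
  proof -
    have "(2::nat)^(cbits a' u) < 2^(cbits a w)" using lt by simp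
    then show ?thesis using sR by linarith
  qed
  also have "\<dots> = ff a u + ff a w + (\<Sum>j\<in>R. ff a j)" using assms(4,6) by (simp add: ff_def)
  also have "\<dots> = (\<Sum>j<n. ff a j)" unfolding dec using nin by simp
  finally show ?thesis using c1 by simp
qed

theorem mainTheorem4:
  fixes n a a' u w :: nat
  assumes "a < 2^n" and "a' < 2^n"
    and "u < w" and "w < n"
    and "\<forall>k<n. k \<noteq> u \<and> k \<noteq> w \<longrightarrow> bj k a = bj k a'"
    and "bj u a = 1" and "bj w a' = 1"
    and "bj w a = 0" and "bj u a' = 0"
  shows "hw n (grow n a) = hw n (grow n a') \<and> scnt n a > scnt n a'"
proof -
  have c: "cbits a n = cbits a' n \<and> (\<Sum>j<n. ff a' j) < (\<Sum>j<n. ff a j)"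
    using compare[OF assms(3-9)] .
  have ca: "pc n a = cbits a n \<and> EE n a = (\<Sum>j<n. ff a j)" using closed_forms[OF assms(1)] .
  have cb: "pc n a' = cbits a' n \<and> EE n a' = (\<Sum>j<n. ff a' j)" using closed_forms[OF assms(2)] .
  have "EE n a' < EE n a" using c ca cb by simp
  then have "(2::nat)^(EE n a') < 2^(EE n a)" by simp
  then have "scnt n a' < scnt n a" using scnt_formula[OF assms(1)] scnt_formula[OF assms(2)] by simp
  moreover have "hw n (grow n a) = hw n (grow n a')"
    using hw_grow[OF assms(1)] hw_grow[OF assms(2)] c ca cb by simp
  ultimately show ?thesis by simp
qed

end
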